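(* Let $X$ be a connected, locally connected, Hausdorff, normal, first countable topological space, $V$ a Banach space with norm distance $d_V$, and $f:X\to V$ a continuous closed map that has local convexity data and is locally fiber connected. For $[x],[y]\in X_f$ let $d([x],[y])$ be the infimum of the lengths $l(\tilde f\circ\gamma)$ (computed with respect to $d_V$) over all continuous curves $\gamma:[a,b]\to X_f$ with $\gamma(a)=[x]$, $\gamma(b)=[y]$. Then $d$ is a metric on $X_f$, and the metric topology it defines coincides with the quotient topology of $X_f$.
   Context: A subset $C\subset V$ is a cone with vertex $v_0$ if $v_0\in C$ and $(1-\lambda)v_0+\lambda v\in C$ for every $\lambda\ge 0$ and every $v\in C$, $v\ne v_0$; it is a convex cone if it is moreover convex. A continuous map $f:X\to V$ has local convexity data if for each $x\in X$ and every sufficiently small open neighborhood $U_x$ of $x$ there is a convex cone $C_x\subset V$ with vertex $f(x)$, endowed with the subspace topology from $V$, such that (VN) $f(U_x)\subset C_x$ and $f(U_x)$ is a neighborhood of $f(x)$ in $C_x$; and (SLO) $f|_{U_x}:U_x\to C_x$ is an open map, and for every neighborhood $U'_x\subset U_x$ of $x$ the set $f(U'_x)$ is a neighborhood of $f(x)$ in $C_x$. A subset $A\subset X$ satisfies condition (LFC) if for every $a\in A$, the set $A$ does not intersect two different connected components of the fiber $f^{-1}(f(a))$. The map $f$ is locally fiber connected if for every $x\in X$, every open neighborhood of $x$ contains a neighborhood $U_x$ of $x$ satisfying (LFC). Declare $x\sim y$ in $X$ iff $f(x)=f(y)$ and $x,y$ lie in the same connected component of $f^{-1}(f(x))$; $X_f:=X/\!\sim$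 with the quotient topology, $\pi_f:X\to X_f$ is the projection and $\tilde f:X_f\to V$ is the unique map with $\tilde f\circ\pi_f=f$. (Under these hypotheses $X_f$ is path connected, so $d$ is finite.) *)

theory Defs
  imports "HOL-Analysis.Analysis"
begin

definition cone_with_vertex :: "'b::real_vector set \<Rightarrow> 'b \<Rightarrow> bool" where
  "cone_with_vertex C v0 \<longleftrightarrow> v0 \<in> C \<and>
     (\<forall>t::real. \<forall>v\<in>C. t \<ge> 0 \<and> v \<noteq> v0 \<longrightarrow> (1 - t) *\<^sub>R v0 + t *\<^sub>R v \<in> C)"

definition convex_cone_with_vertex :: "'b::real_vector set \<Rightarrow> 'b \<Rightarrow> bool" where
  "convex_cone_with_vertex C v0 \<longleftrightarrow> cone_with_vertex C v0 \<and> convex C"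

definition nbhd_in :: "'a topology \<Rightarrow> 'a set \<Rightarrow> 'a \<Rightarrow> bool" where
  "nbhd_in T S p \<longleftrightarrow> (\<exists>G. openin T G \<and> p \<in> G \<and> G \<subseteq> S)"

text \<open>Local convexity data: for each x, every sufficiently small open neighbourhood U
  of x (i.e. every open U with x in U contained in some fixed open W) admits a convex
  cone C with vertex f x satisfying (VN) and (SLO); C carries the subspace topology.\<close>
definition local_convexity_data :: "'a topology \<Rightarrow> ('a \<Rightarrow> 'b::real_normed_vector) \<Rightarrow> bool" where
  "local_convexity_data X f \<longleftrightarrow>
    (\<forall>x\<in>topspace X. \<exists>W. openin X W \<and> x \<in> W \<and>
      (\<forall>U. openin X U \<and> x \<in> U \<and> U \<subseteq> W \<longrightarrow>
        (\<exists>C. convex_cone_with_vertex C (f x) \<and>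
             f ` U \<subseteq> C \<and> nbhd_in (top_of_set C) (f ` U) (f x) \<and>
             open_map (subtopology X U) (top_of_set C) f \<and>
             (\<forall>U'. U' \<subseteq> U \<and> nbhd_in X U' x \<longrightarrow> nbhd_in (top_of_set C) (f ` U') (f x)))))"

definition fiber :: "'a topology \<Rightarrow> ('a \<Rightarrow> 'b) \<Rightarrow> 'a \<Rightarrow> 'a set" where
  "fiber X f a = {y \<in> topspace X. f y = f a}"

definition LFC :: "'a topology \<Rightarrow> ('a \<Rightarrow> 'b) \<Rightarrow> 'a set \<Rightarrow> bool" where
  "LFC X f A \<longleftrightarrow> (\<forall>a\<in>A. \<not> (\<exists>K1 K2.
      K1 \<in> connected_components_of (subtopology X (fiber X f a)) \<and>
      K2 \<in> connected_components_of (subtopology X (fiber X f a)) \<and>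
      K1 \<noteq> K2 \<and> A \<inter> K1 \<noteq> {} \<and> A \<inter> K2 \<noteq> {}))"

definition locally_fiber_connected :: "'a topology \<Rightarrow> ('a \<Rightarrow> 'b) \<Rightarrow> bool" where
  "locally_fiber_connected X f \<longleftrightarrow>
    (\<forall>x\<in>topspace X. \<forall>W. openin X W \<and> x \<in> W \<longrightarrow>
       (\<exists>U. U \<subseteq> W \<and> nbhd_in X U x \<and> LFC X f U))"

definition fclass :: "'a topology \<Rightarrow> ('a \<Rightarrow> 'b) \<Rightarrow> 'a \<Rightarrow> 'a set" where
  "fclass X f x = connected_component_of_set (subtopology X (fiber X f x)) x"

definition Xf :: "'a topology \<Rightarrow> ('a \<Rightarrow> 'b) \<Rightarrow> 'a set set" where
  "Xf X f = fclass X f ` topspace X"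

definition Xf_topology :: "'a topology \<Rightarrow> ('a \<Rightarrow> 'b) \<Rightarrow> 'a set topology" where
  "Xf_topology X f = topology (\<lambda>U. U \<subseteq> Xf X f \<and>
      openin X {x \<in> topspace X. fclass X f x \<in> U})"

definition ftilde :: "('a \<Rightarrow> 'b) \<Rightarrow> 'a set \<Rightarrow> 'b" where
  "ftilde f c = f (SOME x. x \<in> c)"

definition curve_length :: "(real \<Rightarrow> 'b::metric_space) \<Rightarrow> real \<Rightarrow> real \<Rightarrow> ennreal" where
  "curve_length g a b = (SUP ts \<in> {ts. ts \<noteq> [] \<and> sorted ts \<and> hd ts = a \<and> last ts = b}.
      ennreal (\<Sum>i < length ts - 1. dist (g (ts ! i)) (g (ts ! Suc i))))"

definition dXf :: "'a topology \<Rightarrow> ('a \<Rightarrow> 'b::metric_space) \<Rightarrow> 'a set \<Rightarrow> 'a set \<Rightarrow> ennreal" where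
  "dXf X f p q = (INF \<gamma> \<in> {(\<gamma>, a, b) | \<gamma> a b. a \<le> b \<and>
        continuous_map (top_of_set {a..b}) (Xf_topology X f) \<gamma> \<and> \<gamma> a = p \<and> \<gamma> b = q}.
      (case \<gamma> of (\<gamma>, a, b) \<Rightarrow> curve_length (ftilde f \<circ> \<gamma>) a b))"

end

theory Submission
  imports Defs
begin

lemma istop_Xf: "istopology (\<lambda>U. U \<subseteq> Xf X f \<and> openin X {x \<in> topspace X. fclass X f x \<in> U})"
  unfolding istopology_def
proof (rule conjI; intro allI impI)
  fix S T assume a: "S \<subseteq> Xf X f \<and> openin X {x \<in> topspace X. fclass X f x \<in> S}"
    "T \<subseteq> Xf X f \<and> openin X {x \<in> topspace X. fclass X f x \<in> T}"
  have "{x \<in> topspace X. fclass X f x \<in> S \<inter> T} = {x \<in> topspace X. fclass X f x \<in> S} \<inter> {x \<in> topspace X. fclass X f x \<in> T}" by auto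
  then show "S \<inter> T \<subseteq> Xf X f \<and> openin X {x \<in> topspace X. fclass X f x \<in> S \<inter> T}"
    using a by auto
next
  fix K assume K: "\<forall>S\<in>K. S \<subseteq> Xf X f \<and> openin X {x \<in> topspace X. fclass X f x \<in> S}"
  have "{x \<in> topspace X. fclass X f x \<in> \<Union>K} = (\<Union>S\<in>K. {x \<in> topspace X. fclass X f x \<in> S})" by auto
  moreover have "openin X (\<Union>S\<in>K. {x \<in> topspace X. fclass X f x \<in> S})"
    using K by (intro openin_Union) blast
  ultimately show "\<Union>K \<subseteq> Xf X f \<and> openin X {x \<in> topspace X. fclass X f x \<in> \<Union>K}"
    using K by (simp add: Union_least)
qed

lemma openin_Xf: "openin (Xf_topology X f) U \<longleftrightarrow> U \<subseteq> Xf X f \<and> openin X {x \<in> topspace X. fclass X f x \<in> U}"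
  unfolding Xf_topology_def topology_inverse'[OF istop_Xf] by simp

lemma topspace_Xf [simp]: "topspace (Xf_topology X f) = Xf X f"
proof -
  have "{x \<in> topspace X. fclass X f x \<in> Xf X f} = topspace X" by (auto simp: Xf_def)
  then have "openin (Xf_topology X f) (Xf X f)"
    unfolding openin_Xf by simp
  then have "Xf X f \<subseteq> topspace (Xf_topology X f)" by (rule openin_subset)
  moreover have "topspace (Xf_topology X f) \<subseteq> Xf X f"
    using openin_Xf[of X f "topspace (Xf_topology X f)"] by simp
  ultimately show ?thesis by blast
qed

fun plen :: "(real \<Rightarrow> 'b::metric_space) \<Rightarrow> real list \<Rightarrow> real" where
  "plen g (x # y # zs) = dist (g x) (g y) + plen g (y # zs)"
| "plen g _ = 0"

lemma plen_Cons: "plen g (x # ys) = (if ys = [] then 0 else dist (g x) (g (hd ys)) + plen g ys)"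
  by (cases ys) auto

lemma sum_plen: "(\<Sum>i < length ts - 1. dist (g (ts!i)) (g (ts!Suc i))) = plen g ts"
proof (induction ts)
  case Nil
  then show ?case by simp
next
  case (Cons x ts)
  show ?case
  proof (cases ts)
    case Nil
    then show ?thesis by simp
  next
    case (Cons y zs)
    have "(\<Sum>i < length (x # ts) - 1. dist (g ((x # ts)!i)) (g ((x # ts)!Suc i)))
        = (\<Sum>i < Suc (length ts - 1). dist (g ((x # ts)!i)) (g ((x # ts)!Suc i)))"
      using Cons by simp
    also have "\<dots> = dist (g x) (g (ts!0)) + (\<Sum>i < length ts - 1. dist (g (ts!i)) (g (ts!Suc i)))"
      by (subst sum.lessThan_Suc_shift) simp
    also have "\<dots> = plen g (x # ts)" using Cons.IH Cons by simp
    finally show ?thesis .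
  qed
qed

definition parts :: "real \<Rightarrow> real \<Rightarrow> real list set" where
  "parts a b = {ts. ts \<noteq> [] \<and> sorted ts \<and> hd ts = a \<and> last ts = b}"

lemma CL_eq: "curve_length g a b = (SUP ts \<in> parts a b. ennreal (plen g ts))"
  unfolding curve_length_def parts_def sum_plen ..

lemma plen_nonneg: "0 \<le> plen g ts"
  by (induction g ts rule: plen.induct) auto

lemma plen_cong: "(\<And>t. t \<in> set ts \<Longrightarrow> g t = h t) \<Longrightarrow> plen g ts = plen h ts"
  by (induction g ts rule: plen.induct) auto

lemma plen_map: "plen g (map \<phi> ts) = plen (g \<circ> \<phi>) ts"
  by (induction "g \<circ> \<phi>" ts rule: plen.induct) auto

lemma plen_append: "plen g (xs @ ys) = plen g xs + plen g ys +
   (if xs \<noteq> [] \<and> ys \<noteq> [] then dist (g (last xs)) (g (hd ys)) else 0)"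
  by (induction xs) (auto simp: plen_Cons)

lemma plen_rev: "plen g (rev ts) = plen g ts"
proof (induction ts)
  case Nil
  then show ?case by simp
next
  case (Cons x xs)
  then show ?case
    by (auto simp: plen_append plen_Cons last_rev dist_commute)
qed

lemma sorted_bounds: "sorted ts \<Longrightarrow> t \<in> set ts \<Longrightarrow> hd ts \<le> t \<and> t \<le> last ts"
proof (induction ts)
  case Nil
  then show ?case by simp
next
  case (Cons x xs)
  then show ?case by (cases "xs = []") auto
qed

lemma plen_seg: fixes v w :: "'b::real_normed_vector" shows "sorted ts \<Longrightarrow> ts \<noteq> [] \<Longrightarrow>
   plen (\<lambda>t. (1 - t) *\<^sub>R v + t *\<^sub>R w) ts = (last ts - hd ts) * dist v w"
proof (induction ts)
  case Nil
  then show ?case by simp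
next
  case (Cons x ys)
  show ?case
  proof (cases "ys = []")
    case True
    then show ?thesis by simp
  next
    case False
    have xy: "x \<le> hd ys" using Cons.prems False by (cases ys) auto
    have "((1 - x) *\<^sub>R v + x *\<^sub>R w) - ((1 - hd ys) *\<^sub>R v + hd ys *\<^sub>R w) = (x - hd ys) *\<^sub>R (w - v)"
      by (simp add: algebra_simps)
    then have "dist ((1 - x) *\<^sub>R v + x *\<^sub>R w) ((1 - hd ys) *\<^sub>R v + hd ys *\<^sub>R w) = (hd ys - x) * dist v w"
      using xy by (simp add: dist_norm norm_minus_commute)
    then show ?thesis using Cons False by (simp add: plen_Cons algebra_simps)
  qed
qed

lemma CL_cong:
  assumes "\<And>t. a \<le> t \<Longrightarrow> t \<le> b \<Longrightarrow> g t = h t"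
  shows "curve_length g a b = curve_length h a b"
  unfolding CL_eq
proof (rule SUP_cong[OF refl])
  fix ts assume "ts \<in> parts a b"
  then have "\<And>t. t \<in> set ts \<Longrightarrow> a \<le> t \<and> t \<le> b" using sorted_bounds unfolding parts_def by blast
  then show "ennreal (plen g ts) = ennreal (plen h ts)" using assms by (metis plen_cong)
qed

lemma CL_ge:
  assumes "a \<le> t" "t \<le> b"
  shows "ennreal (dist (g a) (g t)) \<le> curve_length g a b"
proof -
  have "[a, t, b] \<in> parts a b" using assms by (simp add: parts_def)
  moreover have "dist (g a) (g t) \<le> plen g [a, t, b]" by simp
  ultimately show ?thesis unfolding CL_eq
    by (meson SUP_upper2 ennreal_leI)
qed

lemma CL_const: "curve_length (\<lambda>_. c) a b = 0"
proof -
  have "plen (\<lambda>_. c) ts = 0" for ts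
    by (induction "(\<lambda>_::real. c)" ts rule: plen.induct) auto
  then show ?thesis unfolding CL_eq by (auto intro!: antisym SUP_least)
qed

lemma CL_reflect: "curve_length (g \<circ> uminus) (-b) (-a) \<le> curve_length g a b"
  unfolding CL_eq
proof (rule SUP_least)
  fix ts assume ts: "ts \<in> parts (-b) (-a)"
  let ?ts = "rev (map uminus ts)"
  have "?ts \<in> parts a b" using ts
    by (auto simp: parts_def sorted_wrt_rev sorted_wrt_map hd_rev last_rev hd_map last_map)
  moreover have "plen g ?ts = plen (g \<circ> uminus) ts" by (simp add: plen_rev plen_map)
  ultimately show "ennreal (plen (g \<circ> uminus) ts) \<le> (SUP ts \<in> parts a b. ennreal (plen g ts))"
    by (metis SUP_upper)
qed

lemma CL_shift: "curve_length (g \<circ> (\<lambda>t. t + h)) a b \<le> curve_length g (a + h) (b + h)"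
  unfolding CL_eq
proof (rule SUP_least)
  fix ts assume ts: "ts \<in> parts a b"
  let ?ts = "map (\<lambda>t. t + h) ts"
  have "?ts \<in> parts (a + h) (b + h)" using ts
    by (auto simp: parts_def sorted_wrt_map hd_map last_map)
  moreover have "plen g ?ts = plen (g \<circ> (\<lambda>t. t + h)) ts" by (simp add: plen_map)
  ultimately show "ennreal (plen (g \<circ> (\<lambda>t. t + h)) ts) \<le> (SUP ts \<in> parts (a + h) (b + h). ennreal (plen g ts))"
    by (metis SUP_upper)
qed

lemma CL_seg: fixes v w :: "'b::real_normed_vector" shows "curve_length (\<lambda>t. (1 - t) *\<^sub>R v + t *\<^sub>R w) 0 1 \<le> ennreal (dist v w)"
  unfolding CL_eq
proof (rule SUP_least)
  fix ts assume "ts \<in> parts 0 1"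
  then show "ennreal (plen (\<lambda>t. (1 - t) *\<^sub>R v + t *\<^sub>R w) ts) \<le> ennreal (dist v w)"
    by (simp add: parts_def plen_seg)
qed

lemma CL_join:
  assumes ab: "a \<le> b" and bc: "b \<le> c" and gb: "g1 b = g2 b"
  shows "curve_length (\<lambda>t. if t \<le> b then g1 t else g2 t) a c \<le> curve_length g1 a b + curve_length g2 b c"
  unfolding CL_eq
proof (rule SUP_least)
  let ?g = "\<lambda>t. if t \<le> b then g1 t else g2 t"
  fix ts assume ts: "ts \<in> parts a c"
  define xs where "xs = takeWhile (\<lambda>t. t < b) ts"
  define ys where "ys = dropWhile (\<lambda>t. t < b) ts"
  have tsxy: "ts = xs @ ys" unfolding xs_def ys_def by simp
  have sts: "sorted ts" "ts \<noteq> []" "hd ts = a" "last ts = c" using ts by (auto simp: parts_def)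
  then have sx: "sorted xs" and sy: "sorted ys" using tsxy sorted_append by metis+
  have xlt: "\<forall>x\<in>set xs. x < b" unfolding xs_def by (auto dest: set_takeWhileD)
  have yne: "ys \<noteq> []"
  proof
    assume "ys = []"
    then have "last ts \<in> set xs" using tsxy sts last_in_set by (metis append_Nil2)
    then show False using xlt sts bc by auto
  qed
  have hdy: "b \<le> hd ys" using yne unfolding ys_def by (metis hd_dropWhile not_less)
  have yge: "\<forall>y\<in>set ys. b \<le> y" using sorted_bounds[OF sy] hdy by force
  have l1: "xs @ [b] \<in> parts a b"
  proof -
    have "sorted (xs @ [b])" using sx xlt by (auto simp: sorted_append)
    moreover have "hd (xs @ [b]) = a"
    proof (cases "xs = []")
      case True
      then have "hd ys = a" using tsxy sts by simp
      then show ?thesis using True hdy ab by simp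
    next
      case False
      then show ?thesis using tsxy sts by simp
    qed
    ultimately show ?thesis by (simp add: parts_def)
  qed
  have l2: "b # ys \<in> parts b c"
    using sy yge yne tsxy sts by (auto simp: parts_def)
  have "plen ?g ts \<le> plen ?g (xs @ [b]) + plen ?g (b # ys)"
    using yne dist_triangle[of "?g (last xs)" "?g (hd ys)" "?g b"]
    by (auto simp: tsxy plen_append plen_Cons)
  also have "plen ?g (xs @ [b]) = plen g1 (xs @ [b])"
    by (rule plen_cong) (use xlt in auto)
  also have "plen ?g (b # ys) = plen g2 (b # ys)"
    by (rule plen_cong) (use yge gb in auto)
  finally have "ennreal (plen ?g ts) \<le> ennreal (plen g1 (xs @ [b])) + ennreal (plen g2 (b # ys))"
    by (simp add: ennreal_plus[symmetric] plen_nonneg ennreal_leI del: ennreal_plus)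
  also have "\<dots> \<le> (SUP ts \<in> parts a b. ennreal (plen g1 ts)) + (SUP ts \<in> parts b c. ennreal (plen g2 ts))"
    by (intro add_mono SUP_upper l1 l2)
  finally show "ennreal (plen ?g ts) \<le> (SUP ts \<in> parts a b. ennreal (plen g1 ts)) + (SUP ts \<in> parts b c. ennreal (plen g2 ts))" .
qed

lemma fclass_sub_fiber: "fclass X f x \<subseteq> fiber X f x"
  unfolding fclass_def using connected_component_of_subset_topspace by fastforce

lemma fiber_sub: "fiber X f x \<subseteq> topspace X"
  unfolding fiber_def by auto

lemma fclass_memD: "y \<in> fclass X f x \<Longrightarrow> y \<in> topspace X \<and> f y = f x"
  using fclass_sub_fiber[of X f x] unfolding fiber_def by auto

lemma fclass_self: "x \<in> topspace X \<Longrightarrow> x \<in> fclass X f x"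
  unfolding fclass_def by (simp add: connected_component_of_refl fiber_def)

lemma fiber_eq: "f y = f x \<Longrightarrow> fiber X f y = fiber X f x"
  unfolding fiber_def by auto

lemma fclass_eq: assumes "y \<in> fclass X f x" shows "fclass X f y = fclass X f x"
proof -
  have fy: "f y = f x" using fclass_memD[OF assms] by simp
  have "connected_component_of (subtopology X (fiber X f x)) x y"
    using assms unfolding fclass_def by simp
  then have "connected_component_of (subtopology X (fiber X f x)) x = connected_component_of (subtopology X (fiber X f x)) y"
    using connected_component_of_equiv by metis
  then show ?thesis unfolding fclass_def fiber_eq[where X=X and f=f and y=y and x=x, OF fy] by simp
qed

lemma fclass_eq_iff: "x \<in> topspace X \<Longrightarrow> y \<in> topspace X \<Longrightarrow> fclass X f x = fclass X f y \<longleftrightarrow> y \<in> fclass X f x"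
  using fclass_eq fclass_self by metis

lemma fclass_in_components: "x \<in> topspace X \<Longrightarrow> fclass X f x \<in> connected_components_of (subtopology X (fiber X f x))"
  unfolding fclass_def
  by (simp add: connected_component_in_connected_components_of fiber_def)

lemma connectedin_fclass: "connectedin X (fclass X f x)"
  unfolding fclass_def using connectedin_connected_component_of connectedin_subtopology by metis

lemma ftilde_fclass: assumes "x \<in> topspace X" shows "ftilde f (fclass X f x) = f x"
proof -
  have "(SOME y. y \<in> fclass X f x) \<in> fclass X f x"
    using fclass_self[OF assms] by (rule someI)
  then show ?thesis unfolding ftilde_def using fclass_memD by metis
qed

lemma Xf_iff: "p \<in> Xf X f \<longleftrightarrow> (\<exists>x\<in>topspace X. p = fclass X f x)"
  unfolding Xf_def by auto

lemma cont_pi: "continuous_map X (Xf_topology X f) (fclass X f)"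
  unfolding continuous_map_def openin_Xf topspace_Xf Xf_def by auto

lemma cont_ftilde:
  fixes f :: "'a \<Rightarrow> 'b::topological_space"
  assumes "continuous_map X euclidean f"
  shows "continuous_map (Xf_topology X f) euclidean (ftilde f)"
proof -
  have "openin (Xf_topology X f) {c \<in> Xf X f. ftilde f c \<in> G}" if G: "open G" for G
  proof -
    have "{x \<in> topspace X. fclass X f x \<in> {c \<in> Xf X f. ftilde f c \<in> G}} = {x \<in> topspace X. f x \<in> G}"
      by (auto simp: ftilde_fclass Xf_def)
    moreover have "openin X {x \<in> topspace X. f x \<in> G}"
      using openin_continuous_map_preimage[OF assms, of G] G by simp
    ultimately show ?thesis
      unfolding openin_Xf by auto
  qed
  then show ?thesis unfolding continuous_map_def by auto
qed

lemma LFC_mono: "LFC X f U \<Longrightarrow> V \<subseteq> U \<Longrightarrow> LFC X f V"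
  unfolding LFC_def by blast

lemma LFC_inj:
  assumes "LFC X f U" "U \<subseteq> topspace X" "u \<in> U" "u' \<in> U" "f u = f u'"
  shows "fclass X f u = fclass X f u'"
proof (rule ccontr)
  assume ne: "fclass X f u \<noteq> fclass X f u'"
  have uX: "u \<in> topspace X" "u' \<in> topspace X" using assms by auto
  have c1: "fclass X f u \<in> connected_components_of (subtopology X (fiber X f u))"
    using fclass_in_components[OF uX(1), of f] .
  have fe: "fiber X f u' = fiber X f u" using fiber_eq[where X=X and f=f and y=u' and x=u] assms(5) by simp
  have c2: "fclass X f u' \<in> connected_components_of (subtopology X (fiber X f u))"
    using fclass_in_components[OF uX(2), of f] fe by simp
  have i1: "U \<inter> fclass X f u \<noteq> {}" using assms(3) fclass_self[OF uX(1), of f] by blast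
  have i2: "U \<inter> fclass X f u' \<noteq> {}" using assms(4) fclass_self[OF uX(2), of f] by blast
  have "\<not> (\<exists>K1 K2.
      K1 \<in> connected_components_of (subtopology X (fiber X f u)) \<and>
      K2 \<in> connected_components_of (subtopology X (fiber X f u)) \<and>
      K1 \<noteq> K2 \<and> U \<inter> K1 \<noteq> {} \<and> U \<inter> K2 \<noteq> {})"
    using assms(1,3) unfolding LFC_def by blast
  then show False using c1 c2 i1 i2 ne by blast
qed

definition chart :: "'a topology \<Rightarrow> ('a \<Rightarrow> 'b::real_normed_vector) \<Rightarrow> 'a \<Rightarrow> 'a set \<Rightarrow> 'b set \<Rightarrow> bool" where
  "chart X f x U C \<longleftrightarrow> openin X U \<and> x \<in> U \<and> convex C \<and> f ` U \<subseteq> C \<and>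
     nbhd_in (top_of_set C) (f ` U) (f x) \<and> open_map (subtopology X U) (top_of_set C) f \<and>
     (\<forall>U'. U' \<subseteq> U \<and> nbhd_in X U' x \<longrightarrow> nbhd_in (top_of_set C) (f ` U') (f x)) \<and> LFC X f U"

lemma chart_D:
  assumes "chart X f x U C"
  shows chart_open: "openin X U" and chart_mem: "x \<in> U" and chart_convex: "convex C"
    and chart_img: "f ` U \<subseteq> C" and chart_nbhd: "nbhd_in (top_of_set C) (f ` U) (f x)"
    and chart_openmap: "open_map (subtopology X U) (top_of_set C) f"
    and chart_SLO: "\<And>U'. U' \<subseteq> U \<Longrightarrow> nbhd_in X U' x \<Longrightarrow> nbhd_in (top_of_set C) (f ` U') (f x)"
    and chart_LFC: "LFC X f U"
  using assms unfolding chart_def by blast+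

lemma chart_exists:
  assumes "local_convexity_data X f" "locally_fiber_connected X f" "x \<in> topspace X"
    "openin X Ob" "x \<in> Ob"
  shows "\<exists>U C. U \<subseteq> Ob \<and> chart X f x U C"
proof -
  have "\<exists>W. openin X W \<and> x \<in> W \<and>
      (\<forall>U. openin X U \<and> x \<in> U \<and> U \<subseteq> W \<longrightarrow>
        (\<exists>C. convex_cone_with_vertex C (f x) \<and>
             f ` U \<subseteq> C \<and> nbhd_in (top_of_set C) (f ` U) (f x) \<and>
             open_map (subtopology X U) (top_of_set C) f \<and>
             (\<forall>U'. U' \<subseteq> U \<and> nbhd_in X U' x \<longrightarrow> nbhd_in (top_of_set C) (f ` U') (f x))))"
    using bspec[OF assms(1)[unfolded local_convexity_data_def] assms(3)] .
  then obtain W where Wall: "openin X W \<and> x \<in> W \<and>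
      (\<forall>U. openin X U \<and> x \<in> U \<and> U \<subseteq> W \<longrightarrow>
        (\<exists>C. convex_cone_with_vertex C (f x) \<and>
             f ` U \<subseteq> C \<and> nbhd_in (top_of_set C) (f ` U) (f x) \<and>
             open_map (subtopology X U) (top_of_set C) f \<and>
             (\<forall>U'. U' \<subseteq> U \<and> nbhd_in X U' x \<longrightarrow> nbhd_in (top_of_set C) (f ` U') (f x))))" ..
  have W: "openin X W" "x \<in> W" using conjunct1[OF Wall] conjunct1[OF conjunct2[OF Wall]] by simp_all
  have WC: "\<forall>U. openin X U \<and> x \<in> U \<and> U \<subseteq> W \<longrightarrow>
        (\<exists>C. convex_cone_with_vertex C (f x) \<and>
             f ` U \<subseteq> C \<and> nbhd_in (top_of_set C) (f ` U) (f x) \<and>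
             open_map (subtopology X U) (top_of_set C) f \<and>
             (\<forall>U'. U' \<subseteq> U \<and> nbhd_in X U' x \<longrightarrow> nbhd_in (top_of_set C) (f ` U') (f x)))"
    using conjunct2[OF conjunct2[OF Wall]] .
  have WO: "openin X (W \<inter> Ob) \<and> x \<in> W \<inter> Ob" using W assms(4,5) by auto
  have "\<forall>W. openin X W \<and> x \<in> W \<longrightarrow> (\<exists>U. U \<subseteq> W \<and> nbhd_in X U x \<and> LFC X f U)"
    using bspec[OF assms(2)[unfolded locally_fiber_connected_def] assms(3)] .
  then have "\<exists>U. U \<subseteq> W \<inter> Ob \<and> nbhd_in X U x \<and> LFC X f U" using WO by (elim allE impE)
  then obtain U0 where U0: "U0 \<subseteq> W \<inter> Ob" "nbhd_in X U0 x" "LFC X f U0"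
    by blast
  obtain G where G: "openin X G" "x \<in> G" "G \<subseteq> U0" using U0(2) unfolding nbhd_in_def by blast
  have GW: "openin X G \<and> x \<in> G \<and> G \<subseteq> W" using G U0(1) by blast
  have "\<exists>C. convex_cone_with_vertex C (f x) \<and>
             f ` G \<subseteq> C \<and> nbhd_in (top_of_set C) (f ` G) (f x) \<and>
             open_map (subtopology X G) (top_of_set C) f \<and>
             (\<forall>U'. U' \<subseteq> G \<and> nbhd_in X U' x \<longrightarrow> nbhd_in (top_of_set C) (f ` U') (f x))"
    using mp[OF spec[OF WC, of G] GW] .
  then obtain C where Call: "convex_cone_with_vertex C (f x) \<and>
             f ` G \<subseteq> C \<and> nbhd_in (top_of_set C) (f ` G) (f x) \<and>
             open_map (subtopology X G) (top_of_set C) f \<and>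
             (\<forall>U'. U' \<subseteq> G \<and> nbhd_in X U' x \<longrightarrow> nbhd_in (top_of_set C) (f ` U') (f x))" ..
  have C: "convex_cone_with_vertex C (f x)"
             "f ` G \<subseteq> C" "nbhd_in (top_of_set C) (f ` G) (f x)"
             "open_map (subtopology X G) (top_of_set C) f"
             "\<forall>U'. U' \<subseteq> G \<and> nbhd_in X U' x \<longrightarrow> nbhd_in (top_of_set C) (f ` U') (f x)"
    using conjunct1[OF Call] conjunct1[OF conjunct2[OF Call]] conjunct1[OF conjunct2[OF conjunct2[OF Call]]]
      conjunct1[OF conjunct2[OF conjunct2[OF conjunct2[OF Call]]]] conjunct2[OF conjunct2[OF conjunct2[OF conjunct2[OF Call]]]]
    by simp_all
  have GO: "G \<subseteq> Ob" using G(3) U0(1) by blast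
  have GL: "LFC X f G" using LFC_mono[OF U0(3) G(3)] .
  have cC: "convex C" using C(1) unfolding convex_cone_with_vertex_def by simp
  have "chart X f x G C" unfolding chart_def
    using G(1,2) cC C(2,3,4,5) GL by (intro conjI) assumption+
  then show ?thesis using GO by blast
qed

lemma chart_inj:
  assumes ch: "chart X f x U C" and "u \<in> U" "u' \<in> U" "f u = f u'"
  shows "fclass X f u = fclass X f u'"
proof -
  have L: "LFC X f U" by (rule chart_LFC[OF ch])
  have S: "U \<subseteq> topspace X" by (rule openin_subset[OF chart_open[OF ch]])
  show ?thesis by (rule LFC_inj[OF L S assms(2,3,4)])
qed

lemma chart_open_image:
  assumes "chart X f x U C" "openin X N" "N \<subseteq> U"
  shows "\<exists>H. open H \<and> f ` N = H \<inter> C"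
proof -
  have "openin (subtopology X U) N" using assms(2,3)
    unfolding openin_subtopology by blast
  then have "openin (top_of_set C) (f ` N)" using chart_openmap[OF assms(1)] unfolding open_map_def by blast
  then obtain H where "open H" "f ` N = C \<inter> H" unfolding openin_open by blast
  then show ?thesis by (metis Int_commute)
qed

lemma sat_open:
  assumes contf: "continuous_map X euclidean f" and lcd: "local_convexity_data X f"
    and lfc: "locally_fiber_connected X f" and U: "openin X U"
  shows "openin X {y \<in> topspace X. fclass X f y \<in> fclass X f ` U}"
proof -
  define S where "S = {y \<in> topspace X. fclass X f y \<in> fclass X f ` U}"
  define D where "D = \<Union>{G. openin X G \<and> G \<subseteq> S}"
  have Dopen: "openin X D" unfolding D_def by (intro openin_Union) blast
  have DS: "D \<subseteq> S" unfolding D_def by blast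
  have "y \<in> D" if y: "y \<in> S" for y
  proof -
    obtain u where u: "u \<in> U" "fclass X f y = fclass X f u" using y unfolding S_def by auto
    have uX: "u \<in> topspace X" using u U openin_subset by blast
    define K where "K = fclass X f u"
    have "y \<in> topspace X" using y unfolding S_def by simp
    then have yK: "y \<in> K" using u(2) fclass_self[of y X f] unfolding K_def by simp
    have key: "k \<in> D" if k: "k \<in> K" and ch: "chart X f k V C" and k': "k' \<in> V \<inter> K \<inter> D" for k V C k'
    proof -
      obtain G' where G': "openin X G'" "k' \<in> G'" "G' \<subseteq> S" using k' unfolding D_def by auto
      have Vo: "openin X V" using ch unfolding chart_def by simp
      obtain H where H: "open H" "f ` (V \<inter> G') = H \<inter> C"
        using chart_open_image[OF ch, of "V \<inter> G'"] Vo G' by auto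
      have fk: "f k' = f k" using fclass_memD[of k X f u] fclass_memD[of k' X f u] k k' unfolding K_def by simp
      have "f k' \<in> f ` (V \<inter> G')" using k' G'(2) by blast
      then have "f k \<in> H" using H(2) fk by auto
      define M where "M = V \<inter> {z \<in> topspace X. f z \<in> H}"
      have "openin X {z \<in> topspace X. f z \<in> H}"
        by (rule openin_continuous_map_preimage[OF contf]) (simp add: H(1))
      then have Mo: "openin X M" unfolding M_def using Vo by (rule openin_Int[rotated])
      have "k \<in> V" by (rule chart_mem[OF ch])
      then have kM: "k \<in> M" using \<open>f k \<in> H\<close> openin_subset[OF Vo] unfolding M_def by blast
      have fVC: "f ` V \<subseteq> C" by (rule chart_img[OF ch])
      have "M \<subseteq> S"
      proof
        fix z assume z: "z \<in> M"
        then have "f z \<in> H \<inter> C" using fVC unfolding M_def by blast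
        then have "f z \<in> f ` (V \<inter> G')" using H(2) by simp
        then obtain n where n: "n \<in> V \<inter> G'" "f z = f n" by (metis imageE)
        have "z \<in> V" using z unfolding M_def by simp
        then have "fclass X f z = fclass X f n" using chart_inj[OF ch, of z n] n by simp
        moreover have "n \<in> S" using n G'(3) by blast
        moreover have "z \<in> topspace X" using z unfolding M_def by simp
        ultimately show "z \<in> S" unfolding S_def by simp
      qed
      then have "M \<in> {G. openin X G \<and> G \<subseteq> S}" using Mo by simp
      then show "k \<in> D" using kM unfolding D_def by (rule UnionI)
    qed
    define E2 where "E2 = \<Union>{V. openin X V \<and> V \<inter> K \<inter> D = {}}"
    have E2o: "openin X E2" unfolding E2_def by (intro openin_Union) blast
    have E2D: "D \<inter> E2 \<inter> K = {}" unfolding E2_def by blast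
    have cover: "K \<subseteq> D \<union> E2"
    proof
      fix k assume k: "k \<in> K"
      have kX: "k \<in> topspace X" using k fclass_memD[of k X f u] unfolding K_def by simp
      obtain V C where ch: "chart X f k V C" using chart_exists[OF lcd lfc kX, of "topspace X"] kX by auto
      show "k \<in> D \<union> E2"
      proof (cases "V \<inter> K \<inter> D = {}")
        case True
        then have "V \<in> {V. openin X V \<and> V \<inter> K \<inter> D = {}}" using chart_open[OF ch] by simp
        then have "k \<in> E2" using chart_mem[OF ch] unfolding E2_def by (rule UnionI)
        then show ?thesis by simp
      next
        case False
        then show ?thesis using key[OF k ch] by auto
      qed
    qed
    have "U \<subseteq> S" using openin_subset[OF U] unfolding S_def by auto
    then have "U \<in> {G. openin X G \<and> G \<subseteq> S}" using U by simp
    then have "u \<in> D" using u(1) unfolding D_def by (rule UnionI)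
    moreover have "u \<in> K" using uX fclass_self[of u X f] unfolding K_def by simp
    ultimately have "D \<inter> K \<noteq> {}" by auto
    moreover have "connectedin X K" unfolding K_def by (rule connectedin_fclass)
    ultimately have "\<not> (openin X D \<and> openin X E2 \<and> K \<subseteq> D \<union> E2 \<and> D \<inter> E2 \<inter> K = {} \<and> D \<inter> K \<noteq> {} \<and> E2 \<inter> K \<noteq> {})"
      unfolding connectedin by blast
    then have "E2 \<inter> K = {}" using Dopen E2o cover E2D \<open>D \<inter> K \<noteq> {}\<close> by blast
    then show "y \<in> D" using cover yK by auto
  qed
  then have "S = D" using DS by blast
  then show ?thesis using Dopen unfolding S_def by simp
qed

lemma pi_open:
  assumes "continuous_map X euclidean f" "local_convexity_data X f"
    "locally_fiber_connected X f" "openin X U"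
  shows "openin (Xf_topology X f) (fclass X f ` U)"
  unfolding openin_Xf using sat_open[OF assms] assms(4) openin_subset
  by (auto simp: Xf_def)

lemma regular_nbhd:
  assumes "Hausdorff_space X" "normal_space X" "openin X U" "x \<in> U"
  shows "\<exists>N. openin X N \<and> x \<in> N \<and> X closure_of N \<subseteq> U"
proof -
  have xX: "x \<in> topspace X" using assms(3,4) openin_subset by blast
  have "t1_space X" by (rule Hausdorff_imp_t1_space[OF assms(1)])
  then have c1: "closedin X {x}" using xX t1_space_closedin_singleton[of X] by blast
  have c2: "closedin X (topspace X - U)" by (rule closedin_diff[OF closedin_topspace assms(3)])
  have "disjnt {x} (topspace X - U)" using assms(4) by auto
  then have "\<exists>G H. openin X G \<and> openin X H \<and> {x} \<subseteq> G \<and> topspace X - U \<subseteq> H \<and> disjnt G H"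
    using mp[OF spec[OF spec[OF assms(2)[unfolded normal_space_def], of "{x}"], of "topspace X - U"]] c1 c2 by blast
  then obtain G H where GH: "openin X G" "openin X H" "{x} \<subseteq> G" "topspace X - U \<subseteq> H" "disjnt G H"
    by blast
  have "G \<subseteq> topspace X - H" using GH openin_subset[OF GH(1)] unfolding disjnt_def by blast
  moreover have "closedin X (topspace X - H)" by (rule closedin_diff[OF closedin_topspace GH(2)])
  ultimately have "X closure_of G \<subseteq> topspace X - H" by (rule closure_of_minimal)
  also have "\<dots> \<subseteq> U" using GH(4) by blast
  finally show ?thesis using GH by blast
qed

lemma conn_side:
  assumes "connectedin X L" "openin X G" "openin X H" "disjnt G H" "L \<subseteq> G \<union> H"
    "s \<in> L" "s \<in> G" "z \<in> L"
  shows "z \<in> G"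
proof (rule ccontr)
  assume "z \<notin> G"
  then have "z \<in> H" using assms by blast
  then have "G \<inter> L \<noteq> {}" "H \<inter> L \<noteq> {}" "G \<inter> H \<inter> L = {}" using assms unfolding disjnt_def by blast+
  moreover have "\<not> (openin X G \<and> openin X H \<and> L \<subseteq> G \<union> H \<and> G \<inter> H \<inter> L = {} \<and> G \<inter> L \<noteq> {} \<and> H \<inter> L \<noteq> {})"
    using assms(1) unfolding connectedin by blast
  ultimately show False using assms(2,3,5) by blast
qed

lemma Hausdorff_Xf:
  fixes f :: "'a \<Rightarrow> 'b::real_normed_vector"
  assumes HX: "Hausdorff_space X" and NX: "normal_space X" and contf: "continuous_map X euclidean f"
    and clf: "closed_map X euclidean f" and lcd: "local_convexity_data X f"
    and lfc: "locally_fiber_connected X f"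
  shows "Hausdorff_space (Xf_topology X f)"
  unfolding Hausdorff_space_def topspace_Xf
proof (intro allI impI, elim conjE)
  fix p q assume p: "p \<in> Xf X f" and q: "q \<in> Xf X f" and pq: "p \<noteq> q"
  obtain x where x: "x \<in> topspace X" "p = fclass X f x" using p Xf_iff by metis
  obtain y where y: "y \<in> topspace X" "q = fclass X f y" using q Xf_iff by metis
  have cft: "continuous_map (Xf_topology X f) euclidean (ftilde f)" by (rule cont_ftilde[OF contf])
  show "\<exists>U V. openin (Xf_topology X f) U \<and> openin (Xf_topology X f) V \<and> p \<in> U \<and> q \<in> V \<and> disjnt U V"
  proof (cases "f x = f y")
    case False
    define e where "e = dist (f x) (f y) / 2"
    have e: "e > 0" using False unfolding e_def by simp
    define U where "U = {c \<in> Xf X f. ftilde f c \<in> ball (f x) e}"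
    define V where "V = {c \<in> Xf X f. ftilde f c \<in> ball (f y) e}"
    have oU: "openin (Xf_topology X f) U"
      using openin_continuous_map_preimage[OF cft, of "ball (f x) e"] unfolding U_def
      by (simp add: open_openin[symmetric])
    have oV: "openin (Xf_topology X f) V"
      using openin_continuous_map_preimage[OF cft, of "ball (f y) e"] unfolding V_def
      by (simp add: open_openin[symmetric])
    have "p \<in> U" using p x e unfolding U_def by (simp add: ftilde_fclass)
    moreover have "q \<in> V" using q y e unfolding V_def by (simp add: ftilde_fclass)
    moreover have "disjnt U V"
    proof -
      have "False" if "c \<in> U" "c \<in> V" for c
      proof -
        have "dist (f x) (ftilde f c) < e" "dist (ftilde f c) (f y) < e"
          using that unfolding U_def V_def by (auto simp: dist_commute)
        then have "dist (f x) (f y) < 2 * e" using dist_triangle[of "f x" "f y" "ftilde f c"] by simp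
        then show False unfolding e_def by simp
      qed
      then show ?thesis unfolding disjnt_def by blast
    qed
    ultimately show ?thesis using oU oV by blast
  next
    case True
    define F where "F = fiber X f x"
    define K where "K = fclass X f x"
    have F_eq: "F = {z \<in> topspace X. f z \<in> {f x}}" unfolding F_def fiber_def by auto
    have closedF: "closedin X F" unfolding F_eq
      by (rule closedin_continuous_map_preimage[OF contf]) (simp add: closed_closedin[symmetric])
    have closedK: "closedin X K"
      using closedin_connected_components_of[OF fclass_in_components[OF x(1), of f]] closedF
      unfolding K_def F_def by (rule closedin_trans_full)
    have KF: "K \<subseteq> F" unfolding K_def F_def by (rule fclass_sub_fiber)
    define E where "E = \<Union>{V. openin X V \<and> V \<inter> F \<subseteq> K}"
    have openE: "openin X E" unfolding E_def by (intro openin_Union) blast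
    have KE: "K \<subseteq> E"
    proof
      fix k assume k: "k \<in> K"
      have kX: "k \<in> topspace X" using k fclass_memD[of k X f x] unfolding K_def by simp
      have fk: "f k = f x" using k fclass_memD[of k X f x] unfolding K_def by simp
      obtain V C where ch: "chart X f k V C" using chart_exists[OF lcd lfc kX, of "topspace X"] kX by auto
      have "V \<inter> F \<subseteq> K"
      proof
        fix w assume w: "w \<in> V \<inter> F"
        then have fw: "f w = f k" using fk unfolding F_def fiber_def by simp
        have "fclass X f w = fclass X f k" using chart_inj[OF ch, of w k] w chart_mem[OF ch] fw by simp
        also have "\<dots> = K" using fclass_eq[of k X f x] k unfolding K_def by simp
        finally show "w \<in> K" using fclass_self[of w X f] w unfolding F_def fiber_def by auto
      qed
      then have "V \<in> {V. openin X V \<and> V \<inter> F \<subseteq> K}" using chart_open[OF ch] by simp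
      then show "k \<in> E" using chart_mem[OF ch] unfolding E_def by (rule UnionI)
    qed
    define R where "R = F - K"
    have R_eq: "R = F \<inter> (topspace X - E)"
    proof
      show "R \<subseteq> F \<inter> (topspace X - E)"
      proof
        fix z assume z: "z \<in> R"
        have "z \<notin> E"
        proof
          assume "z \<in> E"
          then obtain V where "openin X V" "V \<inter> F \<subseteq> K" "z \<in> V" unfolding E_def by blast
          then show False using z unfolding R_def by blast
        qed
        then show "z \<in> F \<inter> (topspace X - E)" using z fiber_sub[of X f x] unfolding R_def F_def by blast
      qed
      show "F \<inter> (topspace X - E) \<subseteq> R" using KE unfolding R_def by blast
    qed
    have closedR: "closedin X R" unfolding R_eq by (rule closedin_Int[OF closedF closedin_diff[OF closedin_topspace openE]])
    have "disjnt K R" unfolding R_def disjnt_def by blast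
    then have "\<exists>G Hs. openin X G \<and> openin X Hs \<and> K \<subseteq> G \<and> R \<subseteq> Hs \<and> disjnt G Hs"
      using mp[OF spec[OF spec[OF NX[unfolded normal_space_def], of K], of R]] closedK closedR by blast
    then obtain G Hs where GH: "openin X G" "openin X Hs" "K \<subseteq> G" "R \<subseteq> Hs" "disjnt G Hs"
      by blast
    define B where "B = f ` (topspace X - (G \<union> Hs))"
    have "closedin X (topspace X - (G \<union> Hs))" by (rule closedin_diff[OF closedin_topspace openin_Un[OF GH(1,2)]])
    then have "closedin euclidean B" using clf unfolding closed_map_def B_def by blast
    then have oB: "openin euclidean (- B)" by (simp add: closed_closedin[symmetric] open_openin[symmetric] open_Compl)
    define T where "T = {z \<in> topspace X. f z \<in> - B}"
    have openT: "openin X T" unfolding T_def by (rule openin_continuous_map_preimage[OF contf oB])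
    have fibT: "w \<in> G \<union> Hs" if "z \<in> T" "w \<in> topspace X" "f w = f z" for z w
    proof (rule ccontr)
      assume "w \<notin> G \<union> Hs"
      then have "f w \<in> B" unfolding B_def using that(2) by blast
      then show False using that unfolding T_def by simp
    qed
    have satG: "z \<in> G" if s: "s \<in> T" "s \<in> G" and z: "z \<in> fclass X f s" for s z
    proof (rule conn_side[OF connectedin_fclass GH(1,2,5) _ _ s(2) z])
      show "s \<in> fclass X f s" using s fclass_self[of s X f] unfolding T_def by simp
      show "fclass X f s \<subseteq> G \<union> Hs" using fibT[OF s(1)] fclass_memD[of _ X f s] by blast
    qed
    have satH: "z \<in> Hs" if s: "s \<in> T" "s \<in> Hs" and z: "z \<in> fclass X f s" for s z
    proof (rule conn_side[OF connectedin_fclass GH(2,1) _ _ _ s(2) z])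
      show "disjnt Hs G" using GH(5) by (simp add: disjnt_sym)
      show "s \<in> fclass X f s" using s fclass_self[of s X f] unfolding T_def by simp
      show "fclass X f s \<subseteq> Hs \<union> G" using fibT[OF s(1)] fclass_memD[of _ X f s] by blast
    qed
    have satT: "z \<in> T" if s: "s \<in> T" and z: "z \<in> fclass X f s" for s z
      using s z fclass_memD[of z X f s] unfolding T_def by simp
    have pre1: "{z \<in> topspace X. fclass X f z \<in> fclass X f ` (T \<inter> G)} = T \<inter> G"
    proof
      show "{z \<in> topspace X. fclass X f z \<in> fclass X f ` (T \<inter> G)} \<subseteq> T \<inter> G"
      proof
        fix z assume "z \<in> {z \<in> topspace X. fclass X f z \<in> fclass X f ` (T \<inter> G)}"
        then obtain s where s: "s \<in> T" "s \<in> G" "fclass X f z = fclass X f s" and zX: "z \<in> topspace X" by blast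
        have "z \<in> fclass X f s" using s(3) fclass_self[OF zX, of f] by simp
        then show "z \<in> T \<inter> G" using satG[OF s(1,2)] satT[OF s(1)] by blast
      qed
      show "T \<inter> G \<subseteq> {z \<in> topspace X. fclass X f z \<in> fclass X f ` (T \<inter> G)}"
        using openin_subset[OF openT] by blast
    qed
    have pre2: "{z \<in> topspace X. fclass X f z \<in> fclass X f ` (T \<inter> Hs)} = T \<inter> Hs"
    proof
      show "{z \<in> topspace X. fclass X f z \<in> fclass X f ` (T \<inter> Hs)} \<subseteq> T \<inter> Hs"
      proof
        fix z assume "z \<in> {z \<in> topspace X. fclass X f z \<in> fclass X f ` (T \<inter> Hs)}"
        then obtain s where s: "s \<in> T" "s \<in> Hs" "fclass X f z = fclass X f s" and zX: "z \<in> topspace X" by blast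
        have "z \<in> fclass X f s" using s(3) fclass_self[OF zX, of f] by simp
        then show "z \<in> T \<inter> Hs" using satH[OF s(1,2)] satT[OF s(1)] by blast
      qed
      show "T \<inter> Hs \<subseteq> {z \<in> topspace X. fclass X f z \<in> fclass X f ` (T \<inter> Hs)}"
        using openin_subset[OF openT] by blast
    qed
    have sub1: "fclass X f ` (T \<inter> G) \<subseteq> Xf X f" using openin_subset[OF openT] unfolding Xf_def by blast
    have sub2: "fclass X f ` (T \<inter> Hs) \<subseteq> Xf X f" using openin_subset[OF openT] unfolding Xf_def by blast
    have o1: "openin (Xf_topology X f) (fclass X f ` (T \<inter> G))"
      unfolding openin_Xf pre1 using sub1 openT GH(1) by blast
    have o2: "openin (Xf_topology X f) (fclass X f ` (T \<inter> Hs))"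
      unfolding openin_Xf pre2 using sub2 openT GH(2) by blast
    have FGH: "F \<subseteq> G \<union> Hs" using GH(3,4) unfolding R_def by blast
    have fxT: "z \<in> T" if "z \<in> topspace X" "f z = f x" for z
    proof -
      have "f x \<notin> B"
      proof
        assume "f x \<in> B"
        then obtain w where w: "w \<in> topspace X" "w \<notin> G \<union> Hs" "f x = f w" unfolding B_def by blast
        then have "w \<in> F" unfolding F_def fiber_def by simp
        then show False using w FGH by blast
      qed
      then show ?thesis using that unfolding T_def by simp
    qed
    have xK: "x \<in> K" unfolding K_def by (rule fclass_self[OF x(1)])
    have "x \<in> T \<inter> G" using fxT[OF x(1) refl] xK GH(3) by blast
    then have pin: "p \<in> fclass X f ` (T \<inter> G)" using x(2) by blast
    have yF: "y \<in> F" using y(1) True unfolding F_def fiber_def by simp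
    have "y \<notin> K"
    proof
      assume "y \<in> K"
      then have "fclass X f y = fclass X f x" using fclass_eq[of y X f x] unfolding K_def by simp
      then show False using pq x y by simp
    qed
    then have "y \<in> Hs" using yF GH(4) unfolding R_def by blast
    then have "y \<in> T \<inter> Hs" using fxT[OF y(1)] True by simp
    then have qin: "q \<in> fclass X f ` (T \<inter> Hs)" using y(2) by blast
    have "disjnt (fclass X f ` (T \<inter> G)) (fclass X f ` (T \<inter> Hs))"
    proof -
      have False if "s1 \<in> T \<inter> G" "s2 \<in> T \<inter> Hs" "fclass X f s1 = fclass X f s2" for s1 s2
      proof -
        have s2X: "s2 \<in> topspace X" using that(2) openin_subset[OF openT] by blast
        have "s2 \<in> fclass X f s1" using that(3) fclass_self[OF s2X, of f] by simp
        then have "s2 \<in> G" using satG that(1) by blast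
        then show False using that(2) GH(5) unfolding disjnt_def by blast
      qed
      then show ?thesis unfolding disjnt_def by blast
    qed
    then show ?thesis using o1 o2 pin qin by blast
  qed
qed

lemma dXf_le:
  assumes "a \<le> b" "continuous_map (top_of_set {a..b}) (Xf_topology X f) \<gamma>" "\<gamma> a = p" "\<gamma> b = q"
  shows "dXf X f p q \<le> curve_length (ftilde f \<circ> \<gamma>) a b"
  unfolding dXf_def by (rule INF_lower2[of "(\<gamma>, a, b)"]) (use assms in auto)

lemma dXf_lessE:
  assumes "dXf X f p q < r"
  obtains \<gamma> a b where "a \<le> b" "continuous_map (top_of_set {a..b}) (Xf_topology X f) \<gamma>" "\<gamma> a = p" "\<gamma> b = q"
    "curve_length (ftilde f \<circ> \<gamma>) a b < r"
proof -
  from assms obtain P where P: "P \<in> {(\<gamma>, a, b) | \<gamma> a b. a \<le> b \<and>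
        continuous_map (top_of_set {a..b}) (Xf_topology X f) \<gamma> \<and> \<gamma> a = p \<and> \<gamma> b = q}"
    and Pl: "(case P of (\<gamma>, a, b) \<Rightarrow> curve_length (ftilde f \<circ> \<gamma>) a b) < r"
    unfolding dXf_def INF_less_iff by blast
  from P obtain \<gamma> a b where "P = (\<gamma>, a, b)" "a \<le> b" "continuous_map (top_of_set {a..b}) (Xf_topology X f) \<gamma>" "\<gamma> a = p" "\<gamma> b = q"
    by blast
  then show ?thesis using that Pl by simp
qed

lemma d_refl: assumes "p \<in> Xf X f" shows "dXf X f p p = 0"
proof -
  have "dXf X f p p \<le> curve_length (ftilde f \<circ> (\<lambda>_. p)) 0 0"
    by (rule dXf_le) (use assms in auto)
  also have "ftilde f \<circ> (\<lambda>_. p) = (\<lambda>_. ftilde f p)" by (simp add: o_def)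
  finally show ?thesis by (simp add: CL_const)
qed

lemma d_sym: fixes f :: "'a \<Rightarrow> 'b::metric_space" shows "dXf X f p q \<le> dXf X f q p"
proof -
  have *: "dXf X f p q \<le> curve_length (ftilde f \<circ> \<gamma>) a b"
    if ab: "a \<le> b" and c: "continuous_map (top_of_set {a..b}) (Xf_topology X f) \<gamma>" and e: "\<gamma> a = q" "\<gamma> b = p" for \<gamma> a b
  proof -
    have cu: "continuous_map (top_of_set {-b..-a}) (top_of_set {a..b}) uminus"
      by (auto intro!: continuous_intros)
    have "dXf X f p q \<le> curve_length (ftilde f \<circ> (\<gamma> \<circ> uminus)) (-b) (-a)"
      by (rule dXf_le) (use ab e continuous_map_compose[OF cu c] in auto)
    also have "\<dots> = curve_length ((ftilde f \<circ> \<gamma>) \<circ> uminus) (-b) (-a)" by (simp add: o_assoc)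
    also have "\<dots> \<le> curve_length (ftilde f \<circ> \<gamma>) a b" by (rule CL_reflect)
    finally show ?thesis .
  qed
  show ?thesis unfolding dXf_def[of X f q p]
  proof (rule INF_greatest)
    fix P :: "(real \<Rightarrow> 'a set) \<times> real \<times> real" assume "P \<in> {(\<gamma>, a, b) | \<gamma> a b. a \<le> b \<and>
        continuous_map (top_of_set {a..b}) (Xf_topology X f) \<gamma> \<and> \<gamma> a = q \<and> \<gamma> b = p}"
    then obtain \<gamma> a b where "P = (\<gamma>, a, b)" "a \<le> b" "continuous_map (top_of_set {a..b}) (Xf_topology X f) \<gamma>" "\<gamma> a = q" "\<gamma> b = p"
      by blast
    then show "dXf X f p q \<le> (case P of (\<gamma>, a, b) \<Rightarrow> curve_length (ftilde f \<circ> \<gamma>) a b)"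
      using *[of a b \<gamma>] by simp
  qed
qed

lemma d_sym_eq: "dXf X f p q = dXf X f q p"
  using d_sym by (metis antisym)

lemma join_path:
  assumes ab: "a \<le> b" and c1: "continuous_map (top_of_set {a..b}) (Xf_topology X f) \<gamma>1"
    and cd: "c \<le> e" and c2: "continuous_map (top_of_set {c..e}) (Xf_topology X f) \<gamma>2"
    and m: "\<gamma>1 b = \<gamma>2 c"
  shows "continuous_map (top_of_set {a..e - (c - b)}) (Xf_topology X f)
            (\<lambda>t. if t \<le> b then \<gamma>1 t else (\<gamma>2 \<circ> (\<lambda>t. t + (c - b))) t)"
    and "curve_length (ftilde f \<circ> (\<lambda>t. if t \<le> b then \<gamma>1 t else (\<gamma>2 \<circ> (\<lambda>t. t + (c - b))) t)) a (e - (c - b))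
          \<le> curve_length (ftilde f \<circ> \<gamma>1) a b + curve_length (ftilde f \<circ> \<gamma>2) c e"
proof -
  let ?h = "c - b"
  let ?S = "{a..e - ?h}"
  have s1: "subtopology (top_of_set ?S) {x \<in> topspace (top_of_set ?S). x \<le> b} = top_of_set {a..b}"
  proof -
    have "?S \<inter> {x \<in> ?S. x \<le> b} = {a..b}" using ab cd by auto
    then show ?thesis by (simp add: subtopology_subtopology)
  qed
  have s2: "subtopology (top_of_set ?S) {x \<in> topspace (top_of_set ?S). b \<le> x} = top_of_set {b..e - ?h}"
  proof -
    have "?S \<inter> {x \<in> ?S. b \<le> x} = {b..e - ?h}" using ab cd by auto
    then show ?thesis by (simp add: subtopology_subtopology)
  qed
  have csh: "continuous_map (top_of_set {b..e - ?h}) (top_of_set {c..e}) (\<lambda>t. t + ?h)"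
    by (auto intro!: continuous_intros)
  have c2': "continuous_map (top_of_set {b..e - ?h}) (Xf_topology X f) (\<gamma>2 \<circ> (\<lambda>t. t + ?h))"
    by (rule continuous_map_compose[OF csh c2])
  show "continuous_map (top_of_set ?S) (Xf_topology X f)
            (\<lambda>t. if t \<le> b then \<gamma>1 t else (\<gamma>2 \<circ> (\<lambda>t. t + (c - b))) t)"
    using continuous_map_cases_le[where X="top_of_set ?S" and p="\<lambda>t. t" and q="\<lambda>t. b" and f=\<gamma>1
        and g="\<gamma>2 \<circ> (\<lambda>t. t + ?h)" and Y="Xf_topology X f"]
    using s1 s2 c1 c2' m by (simp add: continuous_on_id)
  have "ftilde f \<circ> (\<lambda>t. if t \<le> b then \<gamma>1 t else (\<gamma>2 \<circ> (\<lambda>t. t + (c - b))) t)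
      = (\<lambda>t. if t \<le> b then (ftilde f \<circ> \<gamma>1) t else ((ftilde f \<circ> \<gamma>2) \<circ> (\<lambda>t. t + ?h)) t)"
    by (auto simp: fun_eq_iff)
  then have L0: "curve_length (ftilde f \<circ> (\<lambda>t. if t \<le> b then \<gamma>1 t else (\<gamma>2 \<circ> (\<lambda>t. t + (c - b))) t)) a (e - ?h)
      = curve_length (\<lambda>t. if t \<le> b then (ftilde f \<circ> \<gamma>1) t else ((ftilde f \<circ> \<gamma>2) \<circ> (\<lambda>t. t + ?h)) t) a (e - ?h)"
    by simp
  have L1: "curve_length (\<lambda>t. if t \<le> b then (ftilde f \<circ> \<gamma>1) t else ((ftilde f \<circ> \<gamma>2) \<circ> (\<lambda>t. t + ?h)) t) a (e - ?h)
     \<le> curve_length (ftilde f \<circ> \<gamma>1) a b + curve_length ((ftilde f \<circ> \<gamma>2) \<circ> (\<lambda>t. t + ?h)) b (e - ?h)"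
    by (rule CL_join) (use ab cd m in auto)
  have L2: "curve_length ((ftilde f \<circ> \<gamma>2) \<circ> (\<lambda>t. t + ?h)) b (e - ?h) \<le> curve_length (ftilde f \<circ> \<gamma>2) c e"
    using CL_shift[of "ftilde f \<circ> \<gamma>2" ?h b "e - ?h"] by simp
  show "curve_length (ftilde f \<circ> (\<lambda>t. if t \<le> b then \<gamma>1 t else (\<gamma>2 \<circ> (\<lambda>t. t + (c - b))) t)) a (e - (c - b))
          \<le> curve_length (ftilde f \<circ> \<gamma>1) a b + curve_length (ftilde f \<circ> \<gamma>2) c e"
    unfolding L0 using order_trans[OF L1 add_left_mono[OF L2]] .
qed

lemma d_tri: "dXf X f p q \<le> dXf X f p r + dXf X f r q"
proof (rule ennreal_le_epsilon)
  fix e :: real assume fin: "dXf X f p r + dXf X f r q < top" and e: "0 < e"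
  have f1: "dXf X f p r < top" and f2: "dXf X f r q < top" using fin by (auto simp: top_unique)
  have "dXf X f p r < dXf X f p r + ennreal (e/2)"
    using f1 e by (cases "dXf X f p r") (auto simp: ennreal_plus[symmetric] intro!: ennreal_lessI simp del: ennreal_plus)
  then obtain \<gamma>1 a b where g1: "a \<le> b" "continuous_map (top_of_set {a..b}) (Xf_topology X f) \<gamma>1" "\<gamma>1 a = p" "\<gamma>1 b = r"
    "curve_length (ftilde f \<circ> \<gamma>1) a b < dXf X f p r + ennreal (e/2)"
    by (rule dXf_lessE)
  have "dXf X f r q < dXf X f r q + ennreal (e/2)"
    using f2 e by (cases "dXf X f r q") (auto simp: ennreal_plus[symmetric] intro!: ennreal_lessI simp del: ennreal_plus)
  then obtain \<gamma>2 c d where g2: "c \<le> d" "continuous_map (top_of_set {c..d}) (Xf_topology X f) \<gamma>2" "\<gamma>2 c = r" "\<gamma>2 d = q"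
    "curve_length (ftilde f \<circ> \<gamma>2) c d < dXf X f r q + ennreal (e/2)"
    by (rule dXf_lessE)
  have m: "\<gamma>1 b = \<gamma>2 c" using g1 g2 by simp
  note J = join_path[OF g1(1,2) g2(1,2) m]
  have "dXf X f p q \<le> curve_length (ftilde f \<circ> (\<lambda>t. if t \<le> b then \<gamma>1 t else (\<gamma>2 \<circ> (\<lambda>t. t + (c - b))) t)) a (d - (c - b))"
    by (rule dXf_le[OF _ J(1)]) (use g1 g2 in auto)
  also have "\<dots> \<le> curve_length (ftilde f \<circ> \<gamma>1) a b + curve_length (ftilde f \<circ> \<gamma>2) c d" by (rule J(2))
  also have "\<dots> \<le> (dXf X f p r + ennreal (e/2)) + (dXf X f r q + ennreal (e/2))"
    using g1(5) g2(5) by (intro add_mono) auto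
  also have "\<dots> = dXf X f p r + dXf X f r q + ennreal e"
    using e by (simp add: ac_simps ennreal_plus[symmetric] del: ennreal_plus)
  finally show "dXf X f p q \<le> dXf X f p r + dXf X f r q + ennreal e" .
qed

definition phi :: "'a topology \<Rightarrow> ('a \<Rightarrow> 'b) \<Rightarrow> 'a set \<Rightarrow> 'b \<Rightarrow> 'a set" where
  "phi X f U y = fclass X f (SOME u. u \<in> U \<and> f u = y)"

lemma phi_eq:
  assumes ch: "chart X f x U C" and u: "u \<in> U"
  shows "phi X f U (f u) = fclass X f u"
proof -
  have "\<exists>u'. u' \<in> U \<and> f u' = f u" using u by blast
  then have s: "(SOME u'. u' \<in> U \<and> f u' = f u) \<in> U \<and> f (SOME u'. u' \<in> U \<and> f u' = f u) = f u"
    by (rule someI_ex)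
  show ?thesis unfolding phi_def using chart_inj[OF ch, of "SOME u'. u' \<in> U \<and> f u' = f u" u] s u by simp
qed

lemma ftilde_phi:
  assumes ch: "chart X f x U C" and y: "y \<in> f ` U"
  shows "ftilde f (phi X f U y) = y"
proof -
  obtain u where u: "u \<in> U" "y = f u" using y by blast
  have uX: "u \<in> topspace X" using u(1) openin_subset[OF chart_open[OF ch]] by blast
  show ?thesis using phi_eq[OF ch u(1)] ftilde_fclass[OF uX, of f] u(2) by simp
qed

lemma phi_cont:
  assumes ch: "chart X f x U C"
  shows "continuous_map (top_of_set (f ` U)) (Xf_topology X f) (phi X f U)"
  unfolding continuous_map_def
proof (intro conjI allI impI)
  have UX: "U \<subseteq> topspace X" using openin_subset[OF chart_open[OF ch]] .
  show "phi X f U \<in> topspace (top_of_set (f ` U)) \<rightarrow> topspace (Xf_topology X f)"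
  proof
    fix y assume "y \<in> topspace (top_of_set (f ` U))"
    then obtain u where u: "u \<in> U" "y = f u" by auto
    then show "phi X f U y \<in> topspace (Xf_topology X f)"
      using phi_eq[OF ch u(1)] UX unfolding topspace_Xf Xf_def by auto
  qed
  fix Ob assume Ob: "openin (Xf_topology X f) Ob"
  define V where "V = U \<inter> {u \<in> topspace X. fclass X f u \<in> Ob}"
  have oV: "openin X V" unfolding V_def
    using chart_open[OF ch] Ob unfolding openin_Xf by (intro openin_Int) auto
  obtain H where H: "open H" "f ` V = H \<inter> C"
    using chart_open_image[OF ch oV] unfolding V_def by blast
  have eq: "{y \<in> topspace (top_of_set (f ` U)). phi X f U y \<in> Ob} = f ` U \<inter> H"
  proof
    show "{y \<in> topspace (top_of_set (f ` U)). phi X f U y \<in> Ob} \<subseteq> f ` U \<inter> H"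
    proof
      fix y assume "y \<in> {y \<in> topspace (top_of_set (f ` U)). phi X f U y \<in> Ob}"
      then obtain u where u: "u \<in> U" "y = f u" "phi X f U y \<in> Ob" by auto
      then have "u \<in> V" using phi_eq[OF ch u(1)] UX unfolding V_def by auto
      then have "y \<in> f ` V" using u by blast
      then show "y \<in> f ` U \<inter> H" using H(2) u by blast
    qed
    show "f ` U \<inter> H \<subseteq> {y \<in> topspace (top_of_set (f ` U)). phi X f U y \<in> Ob}"
    proof
      fix y assume y: "y \<in> f ` U \<inter> H"
      then obtain u where u: "u \<in> U" "y = f u" by blast
      have "y \<in> C" using chart_img[OF ch] u by blast
      then have "y \<in> f ` V" using H(2) y by blast
      then obtain v where v: "v \<in> V" "y = f v" by blast
      have "phi X f U y = fclass X f v" using phi_eq[OF ch, of v] v unfolding V_def by simp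
      then show "y \<in> {y \<in> topspace (top_of_set (f ` U)). phi X f U y \<in> Ob}"
        using v y unfolding V_def by simp
    qed
  qed
  show "openin (top_of_set (f ` U)) {y \<in> topspace (top_of_set (f ` U)). phi X f U y \<in> Ob}"
    unfolding eq openin_open using H(1) by blast
qed

lemma chart_ball:
  fixes v :: "'b::real_normed_vector"
  assumes "nbhd_in (top_of_set C) S v"
  shows "\<exists>r>0. C \<inter> ball v r \<subseteq> S"
proof -
  obtain G' where G': "openin (top_of_set C) G'" "v \<in> G'" "G' \<subseteq> S" using assms unfolding nbhd_in_def by blast
  obtain Go where Go: "open Go" "G' = C \<inter> Go" using G'(1) unfolding openin_open by blast
  obtain r where r: "r > 0" "ball v r \<subseteq> Go" using Go G'(2) open_contains_ball by blast
  show ?thesis using r Go G' by blast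
qed

lemma local_fin:
  fixes f :: "'a \<Rightarrow> 'b::real_normed_vector"
  assumes contf: "continuous_map X euclidean f" and lcd: "local_convexity_data X f"
    and lfc: "locally_fiber_connected X f" and x: "x \<in> topspace X" and e: "e > 0"
  shows "\<exists>N. openin (Xf_topology X f) N \<and> fclass X f x \<in> N \<and> (\<forall>q\<in>N. dXf X f (fclass X f x) q < ennreal e)"
proof -
  obtain U C where ch: "chart X f x U C" using chart_exists[OF lcd lfc x, of "topspace X"] x by auto
  obtain r where r: "r > 0" "C \<inter> ball (f x) r \<subseteq> f ` U" using chart_ball[OF chart_nbhd[OF ch]] by blast
  define \<rho> where "\<rho> = min r e"
  have \<rho>: "\<rho> > 0" "\<rho> \<le> r" "\<rho> \<le> e" using r e unfolding \<rho>_def by auto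
  have UX: "U \<subseteq> topspace X" using openin_subset[OF chart_open[OF ch]] .
  define N where "N = fclass X f ` U \<inter> {c \<in> topspace (Xf_topology X f). ftilde f c \<in> ball (f x) \<rho>}"
  have oN: "openin (Xf_topology X f) N" unfolding N_def
    by (intro openin_Int pi_open[OF contf lcd lfc chart_open[OF ch]]
        openin_continuous_map_preimage[OF cont_ftilde[OF contf]]) (simp add: open_openin[symmetric])
  have xN: "fclass X f x \<in> N" unfolding N_def using chart_mem[OF ch] x \<rho>(1)
    by (auto simp: ftilde_fclass Xf_def)
  have fxC: "f x \<in> C" using chart_img[OF ch] chart_mem[OF ch] by blast
  have "dXf X f (fclass X f x) q < ennreal e" if q: "q \<in> N" for q
  proof -
    obtain u where u: "u \<in> U" "q = fclass X f u" using q unfolding N_def by blast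
    define w where "w = f u"
    have wC: "w \<in> C" using chart_img[OF ch] u(1) unfolding w_def by blast
    have dw: "dist (f x) w < \<rho>" using q u UX unfolding N_def w_def by (auto simp: ftilde_fclass)
    define seg where "seg = (\<lambda>t::real. (1 - t) *\<^sub>R f x + t *\<^sub>R w)"
    have segU: "seg t \<in> f ` U" if t: "t \<in> {0..1}" for t
    proof -
      have "seg t \<in> C" unfolding seg_def using convexD[OF chart_convex[OF ch] fxC wC, of "1 - t" t] t by simp
      moreover have "dist (f x) (seg t) < r"
      proof -
        have "f x - seg t = t *\<^sub>R (f x - w)" unfolding seg_def by (simp add: algebra_simps)
        then have "dist (f x) (seg t) = t * dist (f x) w" using t by (simp add: dist_norm)
        also have "\<dots> \<le> dist (f x) w" using t by (simp add: mult_left_le_one_le)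
        finally show ?thesis using dw \<rho> by simp
      qed
      ultimately show ?thesis using r(2) by auto
    qed
    have cseg: "continuous_map (top_of_set {0..1}) (top_of_set (f ` U)) seg"
      using segU unfolding seg_def by (auto intro!: continuous_intros)
    have cs: "continuous_map (top_of_set {0..1}) (Xf_topology X f) (phi X f U \<circ> seg)"
      by (rule continuous_map_compose[OF cseg phi_cont[OF ch]])
    have s0: "(phi X f U \<circ> seg) 0 = fclass X f x" unfolding seg_def using phi_eq[OF ch chart_mem[OF ch]] by simp
    have s1: "(phi X f U \<circ> seg) 1 = q" unfolding seg_def using phi_eq[OF ch u(1)] u(2) unfolding w_def by simp
    have "dXf X f (fclass X f x) q \<le> curve_length (ftilde f \<circ> (phi X f U \<circ> seg)) 0 1"
      by (rule dXf_le[OF _ cs s0 s1]) simp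
    also have "\<dots> = curve_length seg 0 1"
      by (rule CL_cong) (use segU ftilde_phi[OF ch] in auto)
    also have "\<dots> \<le> ennreal (dist (f x) w)" unfolding seg_def by (rule CL_seg)
    also have "\<dots> < ennreal e" using dw \<rho> e by (intro ennreal_lessI) auto
    finally show ?thesis .
  qed
  then show ?thesis using oN xN by blast
qed

lemma stays:
  fixes f :: "'a \<Rightarrow> 'b::real_normed_vector"
  assumes HX: "Hausdorff_space X" and NX: "normal_space X" and contf: "continuous_map X euclidean f"
    and clf: "closed_map X euclidean f" and lcd: "local_convexity_data X f"
    and lfc: "locally_fiber_connected X f" and x: "x \<in> topspace X"
    and Oo: "openin (Xf_topology X f) Ob" and xO: "fclass X f x \<in> Ob"
  shows "\<exists>r>0. \<forall>q. dXf X f (fclass X f x) q < ennreal r \<longrightarrow> q \<in> Ob"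
proof -
  define Ob' where "Ob' = {z \<in> topspace X. fclass X f z \<in> Ob}"
  have oOb': "openin X Ob'" using Oo unfolding openin_Xf Ob'_def by simp
  have xOb': "x \<in> Ob'" using x xO unfolding Ob'_def by simp
  obtain U C where UO: "U \<subseteq> Ob'" and ch: "chart X f x U C"
    using chart_exists[OF lcd lfc x oOb' xOb'] by blast
  have UX: "U \<subseteq> topspace X" using openin_subset[OF chart_open[OF ch]] .
  obtain N0 where N0: "openin X N0" "x \<in> N0" "X closure_of N0 \<subseteq> U"
    using regular_nbhd[OF HX NX chart_open[OF ch] chart_mem[OF ch]] by blast
  define Ncl where "Ncl = X closure_of N0"
  have N0cl: "N0 \<subseteq> Ncl" unfolding Ncl_def by (rule closure_of_subset[OF openin_subset[OF N0(1)]])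
  have N0U: "N0 \<subseteq> U" using N0cl N0(3) unfolding Ncl_def by blast
  have "nbhd_in X N0 x" unfolding nbhd_in_def using N0(1,2) by blast
  then have "nbhd_in (top_of_set C) (f ` N0) (f x)" using chart_SLO[OF ch N0U] by blast
  then obtain r where r: "r > 0" "C \<inter> ball (f x) r \<subseteq> f ` N0" using chart_ball[of C "f ` N0" "f x"] by blast
  have "closedin X Ncl" unfolding Ncl_def by simp
  then have "closedin euclidean (f ` Ncl)" by (rule mp[OF spec[OF clf[unfolded closed_map_def]]])
  then have clfN: "closed (f ` Ncl)" by (simp only: closed_closedin)
  have NclU: "Ncl \<subseteq> U" using N0(3) unfolding Ncl_def .
  have HXf: "Hausdorff_space (Xf_topology X f)" by (rule Hausdorff_Xf[OF HX NX contf clf lcd lfc])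
  have cft: "continuous_map (Xf_topology X f) euclidean (ftilde f)" by (rule cont_ftilde[OF contf])
  have "q \<in> Ob" if dq: "dXf X f (fclass X f x) q < ennreal r" for q
  proof -
    obtain \<gamma> a b where ab: "a \<le> b" and c\<gamma>: "continuous_map (top_of_set {a..b}) (Xf_topology X f) \<gamma>"
      and \<gamma>a: "\<gamma> a = fclass X f x" and \<gamma>b: "\<gamma> b = q"
      and L: "curve_length (ftilde f \<circ> \<gamma>) a b < ennreal r"
      using dXf_lessE[OF dq] by blast
    define g where "g = ftilde f \<circ> \<gamma>"
    have cgm: "continuous_map (top_of_set {a..b}) euclidean g"
      unfolding g_def by (rule continuous_map_compose[OF c\<gamma> cft])
    then have contg: "continuous_on {a..b} g" by simp
    have ga: "g a = f x" unfolding g_def using \<gamma>a ftilde_fclass[OF x] by simp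
    have bound: "dist (f x) (g t) < r" if t: "t \<in> {a..b}" for t
    proof -
      have "ennreal (dist (g a) (g t)) \<le> curve_length g a b" using t by (intro CL_ge) auto
      also have "\<dots> < ennreal r" using L unfolding g_def .
      finally show ?thesis using ga by (simp add: ennreal_less_iff)
    qed
    have \<gamma>Xf: "\<gamma> t \<in> Xf X f" if "t \<in> {a..b}" for t
      using continuous_map_image_subset_topspace[OF c\<gamma>] that by auto
    define T where "T = {t \<in> {a..b}. \<gamma> t \<in> fclass X f ` U}"
    have oT: "openin (top_of_set {a..b}) T"
      using openin_continuous_map_preimage[OF c\<gamma> pi_open[OF contf lcd lfc chart_open[OF ch]]]
      unfolding T_def by simp
    have Tab: "T \<subseteq> {a..b}" unfolding T_def by blast
    have gT: "g ` T \<subseteq> f ` Ncl"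
    proof
      fix y assume "y \<in> g ` T"
      then obtain t where t: "t \<in> T" "y = g t" by blast
      then obtain u where u: "u \<in> U" "\<gamma> t = fclass X f u" unfolding T_def by blast
      have gt: "g t = f u" unfolding g_def using u UX ftilde_fclass[of u X f] by auto
      have "f u \<in> C" using chart_img[OF ch] u(1) by blast
      moreover have "dist (f x) (f u) < r" using bound[of t] t(1) gt Tab by auto
      ultimately have "f u \<in> f ` N0" using r(2) by auto
      moreover have "f ` N0 \<subseteq> f ` Ncl" by (rule image_mono[OF N0cl])
      ultimately show "y \<in> f ` Ncl" using t(2) gt by (metis subsetD)
    qed
    have clT: "closure T \<subseteq> {a..b}" using Tab by (simp add: closure_minimal)
    have gclT: "g ` closure T \<subseteq> f ` Ncl"
      by (rule image_closure_subset[OF continuous_on_subset[OF contg clT] clfN gT])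
    have cT: "closedin (top_of_set {a..b}) T"
      unfolding closedin_closed
    proof (intro exI conjI)
      show "closed (closure T)" by simp
      show "T = {a..b} \<inter> closure T"
      proof
        show "T \<subseteq> {a..b} \<inter> closure T" using Tab closure_subset by blast
        show "{a..b} \<inter> closure T \<subseteq> T"
        proof
          fix s assume s: "s \<in> {a..b} \<inter> closure T"
          then obtain n where n: "n \<in> Ncl" "g s = f n" using gclT by blast
          have nU: "n \<in> U" using n NclU by blast
          have nX: "n \<in> topspace X" using nU UX by blast
          have "\<gamma> s = fclass X f n"
          proof (rule ccontr)
            assume ne: "\<gamma> s \<noteq> fclass X f n"
            have "fclass X f n \<in> Xf X f" using nX unfolding Xf_def by blast
            moreover have "\<gamma> s \<in> Xf X f" using \<gamma>Xf[of s] s by blast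
            ultimately have "\<exists>A B. openin (Xf_topology X f) A \<and> openin (Xf_topology X f) B \<and>
              \<gamma> s \<in> A \<and> fclass X f n \<in> B \<and> disjnt A B"
              using mp[OF spec[OF spec[OF HXf[unfolded Hausdorff_space_def topspace_Xf], of "\<gamma> s"], of "fclass X f n"]] ne
              by blast
            then obtain A B where AB: "openin (Xf_topology X f) A" "openin (Xf_topology X f) B"
              "\<gamma> s \<in> A" "fclass X f n \<in> B" "disjnt A B"
              by blast
            define V where "V = U \<inter> {u \<in> topspace X. fclass X f u \<in> B}"
            have oV: "openin X V" unfolding V_def
              using chart_open[OF ch] AB(2) unfolding openin_Xf by (intro openin_Int) auto
            obtain H where H: "open H" "f ` V = H \<inter> C"
              using chart_open_image[OF ch oV] unfolding V_def by blast
            have "n \<in> V" using nU nX AB(4) unfolding V_def by simp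
            then have fnH: "f n \<in> H" using H(2) by blast
            have oW1: "openin (top_of_set {a..b}) {t \<in> {a..b}. \<gamma> t \<in> A}"
              using openin_continuous_map_preimage[OF c\<gamma> AB(1)] by simp
            have oW2: "openin (top_of_set {a..b}) {t \<in> {a..b}. g t \<in> H}"
              using openin_continuous_map_preimage[OF cgm, of H] H(1) by (simp add: open_openin[symmetric])
            have "openin (top_of_set {a..b}) ({t \<in> {a..b}. \<gamma> t \<in> A} \<inter> {t \<in> {a..b}. g t \<in> H})"
              using oW1 oW2 by (rule openin_Int)
            then obtain Wo where Wo: "open Wo" "{t \<in> {a..b}. \<gamma> t \<in> A} \<inter> {t \<in> {a..b}. g t \<in> H} = {a..b} \<inter> Wo"
              unfolding openin_open by blast
            have "s \<in> {t \<in> {a..b}. \<gamma> t \<in> A} \<inter> {t \<in> {a..b}. g t \<in> H}" using s AB(3) n(2) fnH by simp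
            then have "s \<in> Wo" using Wo(2) by blast
            then have "Wo \<inter> closure T \<noteq> {}" using s by blast
            then have "Wo \<inter> T \<noteq> {}" using open_Int_closure_eq_empty[OF Wo(1), of T] by blast
            then obtain t where t: "t \<in> Wo" "t \<in> T" by blast
            have tab: "t \<in> {a..b}" using t(2) Tab by blast
            have tin: "t \<in> {t \<in> {a..b}. \<gamma> t \<in> A} \<inter> {t \<in> {a..b}. g t \<in> H}" using Wo(2) t(1) tab by blast
            obtain u where u: "u \<in> U" "\<gamma> t = fclass X f u" using t(2) unfolding T_def by blast
            have gt: "g t = f u" unfolding g_def using u UX ftilde_fclass[of u X f] by auto
            have "f u \<in> C" using chart_img[OF ch] u(1) by blast
            then have "f u \<in> f ` V" using H(2) tin gt by auto
            then obtain v where v: "v \<in> V" "f u = f v" by blast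
            have "fclass X f u = fclass X f v" using chart_inj[OF ch u(1) _ v(2)] v(1) unfolding V_def by simp
            then have "\<gamma> t \<in> B" using u(2) v(1) unfolding V_def by simp
            moreover have "\<gamma> t \<in> A" using tin by simp
            ultimately show False using AB(5) unfolding disjnt_def by blast
          qed
          then show "s \<in> T" using s nU unfolding T_def by blast
        qed
      qed
    qed
    have "a \<in> T" unfolding T_def using ab \<gamma>a chart_mem[OF ch] by auto
    moreover have "T = {} \<or> T = {a..b}"
      using mp[OF spec[OF connected_Icc[of a b, unfolded connected_clopen], of T]] oT cT by blast
    ultimately have "T = {a..b}" by blast
    then have "b \<in> T" using ab by auto
    then obtain u where u: "u \<in> U" "q = fclass X f u" using \<gamma>b unfolding T_def by auto
    then show "q \<in> Ob" using UO unfolding Ob'_def by auto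
  qed
  then show ?thesis using r(1) by blast
qed

theorem proposition2p22:
  fixes X :: "'a topology" and f :: "'a \<Rightarrow> 'b::banach"
  assumes "connected_space X" and "locally_connected_space X"
    and "Hausdorff_space X" and "normal_space X" and "first_countable X"
    and "continuous_map X euclidean f" and "closed_map X euclidean f"
    and "local_convexity_data X f" and "locally_fiber_connected X f"
  shows "(\<forall>p\<in>Xf X f. \<forall>q\<in>Xf X f. dXf X f p q < \<infinity>)
    \<and> Metric_space (Xf X f) (\<lambda>p q. enn2real (dXf X f p q))
    \<and> Metric_space.mtopology (Xf X f) (\<lambda>p q. enn2real (dXf X f p q)) = Xf_topology X f"
proof -
  note contf = assms(6) and clf = assms(7) and lcd = assms(8) and lfc = assms(9)
  note HX = assms(3) and NX = assms(4)
  define M where "M = Xf X f"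
  define d where "d = (\<lambda>p q. enn2real (dXf X f p q))"
  have HXf: "Hausdorff_space (Xf_topology X f)" by (rule Hausdorff_Xf[OF HX NX contf clf lcd lfc])
  have "connectedin (Xf_topology X f) (fclass X f ` topspace X)"
    by (rule connectedin_continuous_map_image[OF cont_pi]) (simp add: connectedin_topspace assms(1))
  moreover have "fclass X f ` topspace X = topspace (Xf_topology X f)" by (simp add: Xf_def)
  ultimately have "connectedin (Xf_topology X f) (topspace (Xf_topology X f))" by simp
  then have cXf: "connected_space (Xf_topology X f)" by (simp only: connectedin_topspace)
  have nbM: "N \<subseteq> M" if "openin (Xf_topology X f) N" for N
    using openin_subset[OF that] unfolding M_def by simp
  have fin: "dXf X f p q < top" if p: "p \<in> M" and q: "q \<in> M" for p q
  proof -
    define S where "S = {q \<in> M. dXf X f p q < top}"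
    have oS: "openin (Xf_topology X f) S"
    proof (subst openin_subopen, intro ballI)
      fix q assume qS: "q \<in> S"
      then have "q \<in> Xf X f" unfolding S_def M_def by blast
      then obtain y where y: "y \<in> topspace X" "q = fclass X f y" unfolding Xf_iff by blast
      obtain N where N: "openin (Xf_topology X f) N" "q \<in> N" "\<forall>q'\<in>N. dXf X f q q' < ennreal 1"
        using local_fin[OF contf lcd lfc y(1), of 1] y(2) by auto
      have "N \<subseteq> S"
      proof
        fix q' assume q': "q' \<in> N"
        have "dXf X f p q' \<le> dXf X f p q + dXf X f q q'" by (rule d_tri)
        also have "\<dots> < top" using qS N(3) q' unfolding S_def by (auto simp: less_top[symmetric] order.strict_trans)
        finally show "q' \<in> S" using nbM[OF N(1)] q' unfolding S_def by blast
      qed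
      then show "\<exists>T. openin (Xf_topology X f) T \<and> q \<in> T \<and> T \<subseteq> S" using N by blast
    qed
    have oC: "openin (Xf_topology X f) (topspace (Xf_topology X f) - S)"
    proof (subst openin_subopen, intro ballI)
      fix q assume qC: "q \<in> topspace (Xf_topology X f) - S"
      then have qM: "q \<in> M" and qn: "\<not> dXf X f p q < top" unfolding S_def M_def by auto
      have "q \<in> Xf X f" using qM unfolding M_def by blast
      then obtain y where y: "y \<in> topspace X" "q = fclass X f y" unfolding Xf_iff by blast
      obtain N where N: "openin (Xf_topology X f) N" "q \<in> N" "\<forall>q'\<in>N. dXf X f q q' < ennreal 1"
        using local_fin[OF contf lcd lfc y(1), of 1] y(2) by auto
      have "N \<subseteq> topspace (Xf_topology X f) - S"
      proof
        fix q' assume q': "q' \<in> N"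
        have "q' \<notin> S"
        proof
          assume "q' \<in> S"
          then have a: "dXf X f p q' < top" unfolding S_def by simp
          have "dXf X f p q \<le> dXf X f p q' + dXf X f q' q" by (rule d_tri)
          also have "\<dots> < top" using a N(3) q' d_sym_eq[of X f q' q]
            by (auto simp: less_top[symmetric] order.strict_trans)
          finally show False using qn by simp
        qed
        then show "q' \<in> topspace (Xf_topology X f) - S" using openin_subset[OF N(1)] q' by blast
      qed
      then show "\<exists>T. openin (Xf_topology X f) T \<and> q \<in> T \<and> T \<subseteq> topspace (Xf_topology X f) - S" using N by blast
    qed
    have SM: "S \<subseteq> topspace (Xf_topology X f)" unfolding S_def M_def by simp
    have cS: "closedin (Xf_topology X f) S" unfolding closedin_def using SM oC by simp
    have "p \<in> S" using p d_refl[of p X f] unfolding S_def M_def by simp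
    then have "S = topspace (Xf_topology X f)"
      using mp[OF spec[OF cXf[unfolded connected_space_clopen_in], of S]] oS cS by blast
    then show ?thesis using q unfolding S_def M_def by auto
  qed
  have met: "Metric_space M d"
  proof
    show "0 \<le> d x y" for x y unfolding d_def by simp
    show "d x y = d y x" for x y unfolding d_def using d_sym_eq by metis
    show "d x y = 0 \<longleftrightarrow> x = y" if x: "x \<in> M" and y: "y \<in> M" for x y
    proof
      assume d0: "d x y = 0"
      then have dz: "dXf X f x y = 0" using fin[OF x y] unfolding d_def by (auto simp: enn2real_eq_0_iff)
      show "x = y"
      proof (rule ccontr)
        assume ne: "x \<noteq> y"
        have "x \<in> Xf X f" using x unfolding M_def by blast
        then obtain z where z: "z \<in> topspace X" "x = fclass X f z" unfolding Xf_iff by blast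
        have "t1_space (Xf_topology X f)" by (rule Hausdorff_imp_t1_space[OF HXf])
        then have "closedin (Xf_topology X f) {y}" using y t1_space_closedin_singleton unfolding M_def by fastforce
        then have oO: "openin (Xf_topology X f) (topspace (Xf_topology X f) - {y})"
          by (rule openin_diff[OF openin_topspace])
        have xO: "fclass X f z \<in> topspace (Xf_topology X f) - {y}" using x ne z unfolding M_def by simp
        obtain r where r: "r > 0" "\<forall>q. dXf X f (fclass X f z) q < ennreal r \<longrightarrow> q \<in> topspace (Xf_topology X f) - {y}"
          using stays[OF HX NX contf clf lcd lfc z(1) oO xO] by blast
        have "dXf X f (fclass X f z) y < ennreal r" using dz z r(1) by simp
        then show False using r(2) by blast
      qed
    next
      assume "x = y"
      then show "d x y = 0" unfolding d_def using d_refl[of y X f] y unfolding M_def by simp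
    qed
    show "d x z \<le> d x y + d y z" if "x \<in> M" "y \<in> M" "z \<in> M" for x y z
    proof -
      have "enn2real (dXf X f x z) \<le> enn2real (dXf X f x y + dXf X f y z)"
        by (rule enn2real_mono[OF d_tri]) (use fin that in simp)
      also have "\<dots> = enn2real (dXf X f x y) + enn2real (dXf X f y z)"
        by (rule enn2real_plus) (use fin that in auto)
      finally show ?thesis unfolding d_def .
    qed
  qed
  interpret Metric_space M d by (rule met)
  have topo: "mtopology = Xf_topology X f"
    unfolding topology_eq
  proof (intro allI iffI)
    fix S assume S: "openin mtopology S"
    show "openin (Xf_topology X f) S"
    proof (subst openin_subopen, intro ballI)
      fix p assume pS: "p \<in> S"
      have SM: "S \<subseteq> M" using S openin_mtopology by blast
      obtain r where r: "r > 0" "mball p r \<subseteq> S" using S pS openin_mtopology by blast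
      have "p \<in> Xf X f" using pS SM unfolding M_def by blast
      then obtain z where z: "z \<in> topspace X" "p = fclass X f z" unfolding Xf_iff by blast
      obtain N where N: "openin (Xf_topology X f) N" "p \<in> N" "\<forall>q\<in>N. dXf X f p q < ennreal r"
        using local_fin[OF contf lcd lfc z(1) r(1)] z(2) by auto
      have "N \<subseteq> mball p r"
      proof
        fix q assume q: "q \<in> N"
        have qM: "q \<in> M" using nbM[OF N(1)] q by blast
        have "dXf X f p q < ennreal r" using N(3) q by blast
        then have "d p q < r" unfolding d_def using fin[OF _ qM] pS SM by auto
        moreover have "p \<in> M" using pS SM by blast
        ultimately show "q \<in> mball p r" using qM by simp
      qed
      then show "\<exists>T. openin (Xf_topology X f) T \<and> p \<in> T \<and> T \<subseteq> S" using N r(2) by blast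
    qed
  next
    fix S assume S: "openin (Xf_topology X f) S"
    have SM: "S \<subseteq> M" using nbM[OF S] .
    show "openin mtopology S"
      unfolding openin_mtopology
    proof (intro conjI allI impI)
      show "S \<subseteq> M" by (rule SM)
      fix p assume pS: "p \<in> S"
      have "p \<in> Xf X f" using pS SM unfolding M_def by blast
      then obtain z where z: "z \<in> topspace X" "p = fclass X f z" unfolding Xf_iff by blast
      obtain r where r: "r > 0" "\<forall>q. dXf X f (fclass X f z) q < ennreal r \<longrightarrow> q \<in> S"
        using stays[OF HX NX contf clf lcd lfc z(1) S] pS z(2) by blast
      have "mball p r \<subseteq> S"
      proof
        fix q assume q: "q \<in> mball p r"
        then have qM: "q \<in> M" and dq: "d p q < r" by auto
        have "dXf X f p q < ennreal r" using dq fin[OF _ qM] pS SM unfolding d_def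
          by (auto intro: enn2real_less)
        then show "q \<in> S" using r(2) z(2) by blast
      qed
      then show "\<exists>r>0. mball p r \<subseteq> S" using r(1) by blast
    qed
  qed
  have "\<forall>p\<in>Xf X f. \<forall>q\<in>Xf X f. dXf X f p q < \<infinity>" using fin unfolding M_def by simp
  then show ?thesis using met topo unfolding M_def d_def by blast
qed

end
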